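(* Let $(X,V)=(X(t),V(t))_{t\ge0}$ be the global solution of the continuous Motsch–Tadmor model and, for each admissible time-step $h>0$, let $(X^h,V^h)=(X^h(n),V^h(n))_{n\ge0}$ be the solution of the discrete Motsch–Tadmor model with time-step $h$, both with the same initial data $(X^h(0),V^h(0))=(X(0),V(0))$ (all as described in the context, under the standing assumptions there). Assume that $\mathcal{D}(V(0))\le \kappa\int_{\mathcal{D}(X(0))}^{\infty} a(s)\,ds$, and that \[ \|\Delta^x(0)\|_F<M \quad\text{and}\quad \|\Delta^v(0)\|_F<\kappa\int_{\|\Delta^x(0)\|_F}^{M}\psi(s)\,ds . \] Then there is a constant $c_0=c_0(\kappa,N,a)$, independent of $n$ and $h$, such that \[ \limsup_{h\to0}\ \sup_{0\le n<\infty}\|\Delta^{x,h}(n)-\Delta^x(nh)\|_F\le c_0\,\mathcal{D}(V(0)),\qquad \limsup_{h\to0}\ \sup_{0\le n<\infty}\|V^h(n)-V(nh)\|=0 . \]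
   Context: Fix integers $N\ge1$, $d\ge1$, coupling strength $\kappa>0$ and a communication function $a:[0,\infty)\to\mathbb{R}$ with constants $0<c_1\le c_2$ such that $c_1\le a(r)\le c_2$ for all $r\ge0$ and $a$ Lipschitz with constant $L_a>0$. Time-steps are always taken with $0<h<\min\{1,1/\kappa\}$. Continuous MT model: $\dot x_i=v_i$, $\dot v_i=\kappa\sum_{j=1}^N\phi_{ij}(v_j-v_i)$, $i=1,\dots,N$, with $\phi_{ij}=\frac{a(\|x_i-x_j\|)}{\sum_{k=1}^N a(\|x_i-x_k\|)}$ ($\|\cdot\|$ Euclidean on $\mathbb{R}^d$). Discrete MT model with step $h$: $x^h_i(n+1)=x^h_i(n)+hv^h_i(n)$, $v^h_i(n+1)=v^h_i(n)+h\kappa\sum_{j=1}^N\phi^h_{ij}(n)(v^h_j(n)-v^h_i(n))$, with $\phi^h_{ij}(n)=\frac{a(\|x^h_i(n)-x^h_j(n)\|)}{\sum_k a(\|x^h_i(n)-x^h_k(n)\|)}$. Notation: $X=(x_1,\dots,x_N)$, $V=(v_1,\dots,v_N)$, $\|V\|$ the Euclidean norm on $(\mathbb{R}^d)^N$; $\mathcal{D}(X)=\max_{i,j}\|x_i-x_j\|$, $\mathcal{D}(V)=\max_{i,j}\|v_i-v_j\|$; $\Delta^x_{ij}=x_i-x_j$, $\Delta^v_{ij}=v_i-v_j$, $\|\Delta^x\|_F=(\sum_{i,j}\|\Delta^x_{ij}\|^2)^{1/2}$, $\|\Delta^v\|_F$ likewise; $\Delta^{x,h}(n)$ is the matrix $[x^h_i(n)-x^h_j(n)]$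 and $\Delta^x(nh)$ is $[x_i(nh)-x_j(nh)]$. Constants: $\|\phi\|_{\mathrm{Lip}}=\frac{L_a}{Nc_1}(1+\frac{c_2}{c_1})$, $M=\frac{1}{4N\|\phi\|_{\mathrm{Lip}}}$, $\psi(s)=1-\|\phi\|_{\mathrm{Lip}}Ns$. *)

theory Defs
  imports "HOL-Analysis.Analysis"
begin

text \<open>Agents are indexed by i < N; configurations are functions nat => 'v,
  where 'v is Euclidean space R^d (d = DIM('v) >= 1). Values at indices >= N are irrelevant.\<close>

definition mt_phi :: "nat \<Rightarrow> (real \<Rightarrow> real) \<Rightarrow> (nat \<Rightarrow> 'v::euclidean_space) \<Rightarrow> nat \<Rightarrow> nat \<Rightarrow> real" where
  "mt_phi N a X i j = a (norm (X i - X j)) / (\<Sum>k<N. a (norm (X i - X k)))"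

definition mt_force :: "nat \<Rightarrow> real \<Rightarrow> (real \<Rightarrow> real) \<Rightarrow> (nat \<Rightarrow> 'v::euclidean_space) \<Rightarrow> (nat \<Rightarrow> 'v) \<Rightarrow> nat \<Rightarrow> 'v" where
  "mt_force N \<kappa> a X V i = \<kappa> *\<^sub>R (\<Sum>j<N. mt_phi N a X i j *\<^sub>R (V j - V i))"

primrec mt_disc :: "nat \<Rightarrow> real \<Rightarrow> (real \<Rightarrow> real) \<Rightarrow> real \<Rightarrow> (nat \<Rightarrow> 'v::euclidean_space) \<Rightarrow> (nat \<Rightarrow> 'v)
    \<Rightarrow> nat \<Rightarrow> (nat \<Rightarrow> 'v) \<times> (nat \<Rightarrow> 'v)" where
  "mt_disc N \<kappa> a h X0 V0 0 = (X0, V0)"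
| "mt_disc N \<kappa> a h X0 V0 (Suc n) =
     (let (X, V) = mt_disc N \<kappa> a h X0 V0 n
      in (\<lambda>i. X i + h *\<^sub>R V i, \<lambda>i. V i + h *\<^sub>R mt_force N \<kappa> a X V i))"

definition diam :: "nat \<Rightarrow> (nat \<Rightarrow> 'v::euclidean_space) \<Rightarrow> real" where
  "diam N X = Max {norm (X i - X j) | i j. i < N \<and> j < N}"

definition frob :: "nat \<Rightarrow> (nat \<Rightarrow> nat \<Rightarrow> 'v::euclidean_space) \<Rightarrow> real" where
  "frob N D = sqrt (\<Sum>i<N. \<Sum>j<N. (norm (D i j))\<^sup>2)"

definition delta :: "(nat \<Rightarrow> 'v::euclidean_space) \<Rightarrow> nat \<Rightarrow> nat \<Rightarrow> 'v" where
  "delta X i j = X i - X j"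

definition cnorm :: "nat \<Rightarrow> (nat \<Rightarrow> 'v::euclidean_space) \<Rightarrow> real" where
  "cnorm N V = sqrt (\<Sum>i<N. (norm (V i))\<^sup>2)"

definition phi_lip :: "nat \<Rightarrow> real \<Rightarrow> real \<Rightarrow> real \<Rightarrow> real" where
  "phi_lip N La c1 c2 = La / (real N * c1) * (1 + c2 / c1)"

definition M_const :: "nat \<Rightarrow> real \<Rightarrow> real \<Rightarrow> real \<Rightarrow> real" where
  "M_const N La c1 c2 = 1 / (4 * real N * phi_lip N La c1 c2)"

definition psi :: "nat \<Rightarrow> real \<Rightarrow> real \<Rightarrow> real \<Rightarrow> real \<Rightarrow> real" where
  "psi N La c1 c2 s = 1 - phi_lip N La c1 c2 * real N * s"

end

theory Submission
  imports Defs
begin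



lemma mvt_vec:
  fixes f :: "real \<Rightarrow> 'a::real_normed_vector"
  assumes ab: "a \<le> b"
    and d: "\<And>s. s \<in> {a..b} \<Longrightarrow> (f has_vector_derivative f' s) (at s within {a..b})"
    and B: "\<And>s. s \<in> {a..b} \<Longrightarrow> norm (f' s) \<le> B"
  shows "norm (f b - f a) \<le> B * (b - a)"
proof -
  have "norm (f b - f a) \<le> B * norm (b - a)"
  proof (rule differentiable_bound[where S="{a..b}" and f'="\<lambda>s h. h *\<^sub>R f' s"])
    show "convex {a..b}" by simp
    fix s assume s: "s \<in> {a..b}"
    show "(f has_derivative (\<lambda>h. h *\<^sub>R f' s)) (at s within {a..b})"
      using d[OF s] by (simp add: has_vector_derivative_def)
    have "onorm (\<lambda>h::real. h *\<^sub>R f' s) = onorm (\<lambda>h::real. h) * norm (f' s)"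
      by (rule onorm_scaleR_left) (rule bounded_linear_ident)
    then show "onorm (\<lambda>h::real. h *\<^sub>R f' s) \<le> B" using B[OF s] by (simp add: onorm_id)
  qed (use ab in auto)
  then show ?thesis using ab by simp
qed




locale mtl =
  fixes N :: nat and \<kappa> c1 c2 La :: real and a :: "real \<Rightarrow> real"
  assumes N: "N \<ge> 1" and kappa: "\<kappa> > 0"
    and c1: "0 < c1" and c12: "c1 \<le> c2"
    and a_bounds: "\<And>r. r \<ge> 0 \<Longrightarrow> c1 \<le> a r \<and> a r \<le> c2"
    and La: "La > 0"
    and a_lip: "\<And>r s. r \<ge> 0 \<Longrightarrow> s \<ge> 0 \<Longrightarrow> \<bar>a r - a s\<bar> \<le> La * \<bar>r - s\<bar>"
begin

lemma a_ge: "c1 \<le> a (norm (y::'v::euclidean_space))" using a_bounds[of "norm y"] by simp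
lemma a_le: "a (norm (y::'v::euclidean_space)) \<le> c2" using a_bounds[of "norm y"] by simp

lemma S_ge: "real N * c1 \<le> (\<Sum>k<N. a (norm (X i - X k :: 'v::euclidean_space)))"
  using sum_bounded_below[of "{..<N}" c1 "\<lambda>k. a (norm (X i - X k))"] a_ge by auto

lemma S_le: "(\<Sum>k<N. a (norm (X i - X k :: 'v::euclidean_space))) \<le> real N * c2"
  using sum_bounded_above[of "{..<N}" "\<lambda>k. a (norm (X i - X k))" c2] a_le by auto

lemma S_pos: "c1 \<le> (\<Sum>k<N. a (norm (X i - X k :: 'v::euclidean_space)))"
proof -
  have "c1 \<le> real N * c1" using N c1 by (simp add: mult_le_cancel_right1)
  then show ?thesis using S_ge[of X i] by linarith
qed

lemma phi_nonneg: "0 \<le> mt_phi N a (X::nat \<Rightarrow> 'v::euclidean_space) i j"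
  unfolding mt_phi_def using S_pos[of X i] a_ge[of "X i - X j"] c1 by simp

lemma phi_le1: assumes "j < N" shows "mt_phi N a (X::nat \<Rightarrow> 'v::euclidean_space) i j \<le> 1"
proof -
  have "a (norm (X i - X j)) \<le> (\<Sum>k<N. a (norm (X i - X k)))"
    by (rule member_le_sum) (use assms a_ge c1 in \<open>auto intro: order_trans[OF less_imp_le[OF c1]]\<close>)
  then show ?thesis unfolding mt_phi_def using S_pos[of X i] c1 by simp
qed

lemma phi_sum: "(\<Sum>j<N. mt_phi N a (X::nat \<Rightarrow> 'v::euclidean_space) i j) = 1"
  unfolding mt_phi_def using S_pos[of X i] c1 by (simp add: sum_divide_distrib[symmetric])

lemma phi_ge: "c1 / (real N * c2) \<le> mt_phi N a (X::nat \<Rightarrow> 'v::euclidean_space) i j"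
  unfolding mt_phi_def
proof (rule frac_le)
  show "0 \<le> a (norm (X i - X j))" using a_ge[of "X i - X j"] c1 by simp
  show "c1 \<le> a (norm (X i - X j))" by (rule a_ge)
  show "0 < (\<Sum>k<N. a (norm (X i - X k)))" using S_pos[of X i] c1 by simp
  show "(\<Sum>k<N. a (norm (X i - X k))) \<le> real N * c2" by (rule S_le)
qed

lemma force_alt: "mt_force N \<kappa> a X V i = \<kappa> *\<^sub>R ((\<Sum>j<N. mt_phi N a X i j *\<^sub>R V j) - V i)"
proof -
  have "(\<Sum>j<N. mt_phi N a X i j *\<^sub>R (V j - V i)) = (\<Sum>j<N. mt_phi N a X i j *\<^sub>R V j) - (\<Sum>j<N. mt_phi N a X i j) *\<^sub>R V i"
    by (simp add: scaleR_diff_right sum_subtractf scaleR_sum_left)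
  then show ?thesis unfolding mt_force_def by (simp add: phi_sum)
qed

lemma force_bound:
  assumes "\<And>j. j < N \<Longrightarrow> norm (V j - V i) \<le> B"
  shows "norm (mt_force N \<kappa> a (X::nat \<Rightarrow> 'v::euclidean_space) V i) \<le> \<kappa> * B"
proof -
  have "norm (\<Sum>j<N. mt_phi N a X i j *\<^sub>R (V j - V i)) \<le> (\<Sum>j<N. norm (mt_phi N a X i j *\<^sub>R (V j - V i)))"
    by (rule norm_sum)
  also have "\<dots> \<le> (\<Sum>j<N. mt_phi N a X i j * B)"
    by (rule sum_mono) (simp add: phi_nonneg assms mult_left_mono)
  also have "\<dots> = B" by (simp add: sum_distrib_right[symmetric] phi_sum)
  finally show ?thesis unfolding mt_force_def using kappa by (simp add: mult_left_mono)
qed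

lemma a_diff:
  assumes "i < N" "j < N"
  shows "\<bar>a (norm (X i - X j)) - a (norm (X' i - X' j))\<bar> \<le> 2 * La * (\<Sum>k<N. norm (X k - X' k :: 'v::euclidean_space))"
proof -
  let ?e = "\<Sum>k<N. norm (X k - X' k)"
  have "\<bar>a (norm (X i - X j)) - a (norm (X' i - X' j))\<bar> \<le> La * \<bar>norm (X i - X j) - norm (X' i - X' j)\<bar>"
    by (rule a_lip) auto
  also have "\<bar>norm (X i - X j) - norm (X' i - X' j)\<bar> \<le> norm ((X i - X j) - (X' i - X' j))"
    by (rule norm_triangle_ineq3)
  also have "(X i - X j) - (X' i - X' j) = (X i - X' i) - (X j - X' j)" by simp
  also have "norm \<dots> \<le> norm (X i - X' i) + norm (X j - X' j)" by (rule norm_triangle_ineq4)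
  also have "\<dots> \<le> ?e + ?e"
    by (intro add_mono member_le_sum) (use assms in auto)
  finally show ?thesis using La by (simp add: mult_left_mono)
qed

lemma S_diff:
  assumes "i < N"
  shows "\<bar>(\<Sum>k<N. a (norm (X i - X k))) - (\<Sum>k<N. a (norm (X' i - X' k)))\<bar> \<le> real N * (2 * La * (\<Sum>k<N. norm (X k - X' k :: 'v::euclidean_space)))"
proof -
  have "\<bar>(\<Sum>k<N. a (norm (X i - X k))) - (\<Sum>k<N. a (norm (X' i - X' k)))\<bar>
      = \<bar>\<Sum>k<N. a (norm (X i - X k)) - a (norm (X' i - X' k))\<bar>" by (simp add: sum_subtractf)
  also have "\<dots> \<le> (\<Sum>k<N. \<bar>a (norm (X i - X k)) - a (norm (X' i - X' k))\<bar>)" by (rule sum_abs)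
  also have "\<dots> \<le> (\<Sum>k<N. 2 * La * (\<Sum>k<N. norm (X k - X' k)))"
    by (rule sum_mono) (use assms a_diff in auto)
  finally show ?thesis by simp
qed

lemma phi_lip:
  assumes "i < N" "j < N"
  shows "\<bar>mt_phi N a X i j - mt_phi N a X' i j\<bar> \<le> (2*La/c1 + 2*real N*La*c2/c1^2) * (\<Sum>k<N. norm (X k - X' k :: 'v::euclidean_space))"
proof -
  define e where "e = (\<Sum>k<N. norm (X k - X' k))"
  define A where "A = a (norm (X i - X j))"
  define A' where "A' = a (norm (X' i - X' j))"
  define S where "S = (\<Sum>k<N. a (norm (X i - X k)))"
  define S' where "S' = (\<Sum>k<N. a (norm (X' i - X' k)))"
  have e0: "0 \<le> e" unfolding e_def by (simp add: sum_nonneg)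
  have S: "c1 \<le> S" "c1 \<le> S'" unfolding S_def S'_def by (rule S_pos)+
  have A'b: "0 \<le> A'" "A' \<le> c2" unfolding A'_def using a_ge[of "X' i - X' j"] a_le[of "X' i - X' j"] c1 by auto
  have dA: "\<bar>A - A'\<bar> \<le> 2 * La * e" unfolding A_def A'_def e_def using a_diff assms by blast
  have dS: "\<bar>S' - S\<bar> \<le> real N * (2 * La * e)" unfolding S_def S'_def e_def using S_diff[OF assms(1), of X X'] by (simp add: abs_minus_commute)
  have Sp: "0 < S" "0 < S'" using S c1 by auto
  have eq: "A / S - A' / S' = (A - A') / S + A' * (S' - S) / (S * S')"
    using Sp by (simp add: field_simps)
  have t1: "\<bar>(A - A') / S\<bar> \<le> 2 * La * e / c1"
  proof -
    have "\<bar>(A - A') / S\<bar> = \<bar>A - A'\<bar> / S" using Sp by simp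
    also have "\<dots> \<le> 2 * La * e / S" using dA Sp by (simp add: divide_right_mono)
    also have "\<dots> \<le> 2 * La * e / c1" using S c1 e0 La by (intro divide_left_mono) auto
    finally show ?thesis .
  qed
  have t2: "\<bar>A' * (S' - S) / (S * S')\<bar> \<le> 2*real N*La*c2/c1^2 * e"
  proof -
    have "\<bar>A' * (S' - S) / (S * S')\<bar> = A' * \<bar>S' - S\<bar> / (S * S')" using Sp A'b by (simp add: abs_mult)
    also have "\<dots> \<le> c2 * (real N * (2 * La * e)) / (S * S')"
      using Sp A'b dS by (intro divide_right_mono mult_mono) auto
    also have "\<dots> \<le> c2 * (real N * (2 * La * e)) / (c1 * c1)"
      using S c1 e0 La A'b by (intro divide_left_mono mult_mono) auto
    also have "\<dots> = 2*real N*La*c2/c1^2 * e" by (simp add: power2_eq_square field_simps)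
    finally show ?thesis .
  qed
  have "\<bar>A / S - A' / S'\<bar> \<le> 2 * La * e / c1 + 2*real N*La*c2/c1^2 * e"
    unfolding eq using t1 t2 by (rule abs_triangle_ineq[THEN order_trans, OF add_mono])
  then show ?thesis unfolding mt_phi_def A_def A'_def S_def S'_def e_def by (simp add: field_simps)
qed

lemma force_lip:
  assumes i: "i < N" and B: "\<And>j. j < N \<Longrightarrow> norm (V' j - V' i) \<le> B"
  shows "norm (mt_force N \<kappa> a X V i - mt_force N \<kappa> a X' V' i)
     \<le> \<kappa> * (real N * (2*La/c1 + 2*real N*La*c2/c1^2) * B * (\<Sum>k<N. norm (X k - X' k :: 'v::euclidean_space))
            + (real N + 1) * (\<Sum>k<N. norm (V k - V' k)))"
proof -
  define K where "K = 2*La/c1 + 2*real N*La*c2/c1^2"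
  define e where "e = (\<Sum>k<N. norm (X k - X' k))"
  define ev where "ev = (\<Sum>k<N. norm (V k - V' k))"
  have K0: "0 \<le> 2*La/c1 + 2*real N*La*c2/c1^2" using La c1 c12 by simp
  have B0: "0 \<le> B" using B[OF i] by (meson norm_ge_zero order_trans)
  have trm: "norm (mt_phi N a X i j *\<^sub>R (V j - V i) - mt_phi N a X' i j *\<^sub>R (V' j - V' i))
      \<le> K * e * B + norm (V j - V' j) + norm (V i - V' i)" if j: "j < N" for j
  proof -
    have "mt_phi N a X i j *\<^sub>R (V j - V i) - mt_phi N a X' i j *\<^sub>R (V' j - V' i)
        = (mt_phi N a X i j - mt_phi N a X' i j) *\<^sub>R (V' j - V' i) + mt_phi N a X i j *\<^sub>R ((V j - V' j) - (V i - V' i))"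
      by (simp add: algebra_simps)
    also have "norm \<dots> \<le> norm ((mt_phi N a X i j - mt_phi N a X' i j) *\<^sub>R (V' j - V' i)) + norm (mt_phi N a X i j *\<^sub>R ((V j - V' j) - (V i - V' i)))"
      by (rule norm_triangle_ineq)
    also have "norm ((mt_phi N a X i j - mt_phi N a X' i j) *\<^sub>R (V' j - V' i)) \<le> K * e * B"
      unfolding norm_scaleR K_def e_def
      by (intro mult_mono phi_lip i j B) (use B0 K0 in \<open>auto intro!: mult_nonneg_nonneg sum_nonneg\<close>)
    also have "norm (mt_phi N a X i j *\<^sub>R ((V j - V' j) - (V i - V' i))) \<le> 1 * norm ((V j - V' j) - (V i - V' i))"
      unfolding norm_scaleR using phi_nonneg[of X i j] phi_le1[OF j, of X i]
      by (intro mult_right_mono) auto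
    also have "\<dots> \<le> norm (V j - V' j) + norm (V i - V' i)" by (simp add: norm_triangle_ineq4)
    finally show ?thesis by simp
  qed
  have "mt_force N \<kappa> a X V i - mt_force N \<kappa> a X' V' i
      = \<kappa> *\<^sub>R (\<Sum>j<N. mt_phi N a X i j *\<^sub>R (V j - V i) - mt_phi N a X' i j *\<^sub>R (V' j - V' i))"
    unfolding mt_force_def by (simp add: sum_subtractf scaleR_diff_right)
  also have "norm \<dots> \<le> \<kappa> * (\<Sum>j<N. K * e * B + norm (V j - V' j) + norm (V i - V' i))"
    unfolding norm_scaleR using kappa
    by (simp only: abs_of_pos[OF kappa]) (intro mult_left_mono order_trans[OF norm_sum] sum_mono trm, auto)
  also have "(\<Sum>j<N. K * e * B + norm (V j - V' j) + norm (V i - V' i)) = real N * K * e * B + ev + real N * norm (V i - V' i)"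
    unfolding ev_def by (simp add: sum.distrib)
  also have "\<dots> \<le> real N * K * B * e + (real N + 1) * ev"
  proof -
    have "norm (V i - V' i) \<le> ev" unfolding ev_def by (rule member_le_sum) (use i in auto)
    then have "real N * norm (V i - V' i) \<le> real N * ev" by (simp add: mult_left_mono)
    then show ?thesis by (simp add: algebra_simps)
  qed
  finally show ?thesis using kappa unfolding K_def e_def ev_def by (simp add: mult_left_mono)
qed

end



lemma dobrushin:
  fixes V :: "nat \<Rightarrow> 'v::real_normed_vector"
  assumes p: "\<And>j. j < N \<Longrightarrow> \<mu> \<le> p j" and q: "\<And>j. j < N \<Longrightarrow> \<mu> \<le> q j"
    and sp: "sum p {..<N} = 1" and sq: "sum q {..<N} = 1"
    and D: "\<And>j l. j < N \<Longrightarrow> l < N \<Longrightarrow> norm (V j - V l) \<le> D"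
  shows "norm ((\<Sum>j<N. p j *\<^sub>R V j) - (\<Sum>j<N. q j *\<^sub>R V j)) \<le> (1 - real N * \<mu>) * D"
proof -
  define p' where "p' j = p j - \<mu>" for j
  define q' where "q' j = q j - \<mu>" for j
  define s where "s = 1 - real N * \<mu>"
  have p'0: "\<And>j. j < N \<Longrightarrow> 0 \<le> p' j" and q'0: "\<And>j. j < N \<Longrightarrow> 0 \<le> q' j"
    using p q by (auto simp: p'_def q'_def)
  have sp': "sum p' {..<N} = s" unfolding p'_def s_def using sp by (simp add: sum_subtractf)
  have sq': "sum q' {..<N} = s" unfolding q'_def s_def using sq by (simp add: sum_subtractf)
  have eqp: "(\<Sum>j<N. p j *\<^sub>R V j) = (\<Sum>j<N. p' j *\<^sub>R V j) + \<mu> *\<^sub>R (\<Sum>j<N. V j)"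
    unfolding p'_def by (simp add: scaleR_diff_left sum_subtractf scaleR_sum_right)
  have eqq: "(\<Sum>j<N. q j *\<^sub>R V j) = (\<Sum>j<N. q' j *\<^sub>R V j) + \<mu> *\<^sub>R (\<Sum>j<N. V j)"
    unfolding q'_def by (simp add: scaleR_diff_left sum_subtractf scaleR_sum_right)
  define w where "w = (\<Sum>j<N. p' j *\<^sub>R V j) - (\<Sum>j<N. q' j *\<^sub>R V j)"
  have lhs: "(\<Sum>j<N. p j *\<^sub>R V j) - (\<Sum>j<N. q j *\<^sub>R V j) = w"
    unfolding eqp eqq w_def by simp
  have s0: "0 \<le> s" using sp' p'0 by (metis sum_nonneg lessThan_iff)
  have key: "s *\<^sub>R w = (\<Sum>j<N. \<Sum>l<N. (p' j * q' l) *\<^sub>R (V j - V l))"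
  proof -
    have 1: "(\<Sum>j<N. \<Sum>l<N. (p' j * q' l) *\<^sub>R V j) = s *\<^sub>R (\<Sum>j<N. p' j *\<^sub>R V j)"
    proof -
      have "(\<Sum>j<N. \<Sum>l<N. (p' j * q' l) *\<^sub>R V j) = (\<Sum>j<N. (p' j * s) *\<^sub>R V j)"
        by (simp add: scaleR_sum_left[symmetric] sum_distrib_left[symmetric] sq')
      also have "\<dots> = s *\<^sub>R (\<Sum>j<N. p' j *\<^sub>R V j)" by (simp add: scaleR_sum_right mult.commute)
      finally show ?thesis .
    qed
    have 2: "(\<Sum>j<N. \<Sum>l<N. (p' j * q' l) *\<^sub>R V l) = s *\<^sub>R (\<Sum>l<N. q' l *\<^sub>R V l)"
    proof -
      have "(\<Sum>j<N. \<Sum>l<N. (p' j * q' l) *\<^sub>R V l) = (\<Sum>l<N. \<Sum>j<N. (p' j * q' l) *\<^sub>R V l)"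
        by (rule sum.swap)
      also have "\<dots> = (\<Sum>l<N. (s * q' l) *\<^sub>R V l)"
        by (simp add: scaleR_sum_left[symmetric] sum_distrib_right[symmetric] sp')
      also have "\<dots> = s *\<^sub>R (\<Sum>l<N. q' l *\<^sub>R V l)" by (simp add: scaleR_sum_right)
      finally show ?thesis .
    qed
    show ?thesis unfolding w_def
      by (simp add: scaleR_diff_right sum_subtractf 1 2)
  qed
  have "norm (s *\<^sub>R w) \<le> (\<Sum>j<N. \<Sum>l<N. (p' j * q' l) * D)"
    unfolding key
    by (intro order_trans[OF norm_sum] sum_mono)
       (auto simp: p'0 q'0 D intro!: order_trans[OF norm_sum] sum_mono mult_left_mono)
  also have "\<dots> = s * s * D"
    by (simp add: sum_distrib_right[symmetric] sum_distrib_left[symmetric] sp' sq')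
  finally have sw: "s * norm w \<le> s * (s * D)" using s0 by (simp add: mult.assoc)
  show ?thesis
  proof (cases "s = 0")
    case True
    then have "\<forall>j\<in>{..<N}. p' j = 0" using sp' p'0 sum_nonneg_eq_0_iff[of "{..<N}" p'] by auto
    moreover have "\<forall>j\<in>{..<N}. q' j = 0" using True sq' q'0 sum_nonneg_eq_0_iff[of "{..<N}" q'] by auto
    ultimately have "w = 0" unfolding w_def by simp
    then show ?thesis using lhs True s_def by simp
  next
    case False
    then have "norm w \<le> s * D" using sw s0 by (simp add: mult_le_cancel_left)
    then show ?thesis using lhs s_def by simp
  qed
qed

context mtl begin

lemma disc_fst_Suc: "fst (mt_disc N \<kappa> a h Xs Vs (Suc n)) =
  (\<lambda>i. fst (mt_disc N \<kappa> a h Xs Vs n) i + h *\<^sub>R snd (mt_disc N \<kappa> a h Xs Vs n) i)"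
  by (simp add: split_beta Let_def)

lemma disc_snd_Suc: "snd (mt_disc N \<kappa> a h Xs Vs (Suc n)) =
  (\<lambda>i. snd (mt_disc N \<kappa> a h Xs Vs n) i + h *\<^sub>R mt_force N \<kappa> a (fst (mt_disc N \<kappa> a h Xs Vs n)) (snd (mt_disc N \<kappa> a h Xs Vs n)) i)"
  by (simp add: split_beta Let_def)

lemma step_contract:
  fixes X V :: "nat \<Rightarrow> 'v::euclidean_space"
  assumes h: "0 < h" "h * \<kappa> \<le> 1" and D: "\<And>i j. i < N \<Longrightarrow> j < N \<Longrightarrow> norm (V i - V j) \<le> D"
    and ik: "i < N" "k < N"
  shows "norm ((V i + h *\<^sub>R mt_force N \<kappa> a X V i) - (V k + h *\<^sub>R mt_force N \<kappa> a X V k)) \<le> (1 - h * \<kappa> * (c1 / c2)) * D"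
proof -
  define A where "A i = (\<Sum>j<N. mt_phi N a X i j *\<^sub>R V j)" for i
  have e: "(V i + h *\<^sub>R mt_force N \<kappa> a X V i) - (V k + h *\<^sub>R mt_force N \<kappa> a X V k)
     = (1 - h * \<kappa>) *\<^sub>R (V i - V k) + (h * \<kappa>) *\<^sub>R (A i - A k)"
    unfolding force_alt A_def by (simp add: algebra_simps)
  have NN: "real N * (c1 / (real N * c2)) = c1 / c2" using N by simp
  have dob: "norm (A i - A k) \<le> (1 - c1 / c2) * D"
    unfolding A_def
    using dobrushin[of N "c1 / (real N * c2)" "mt_phi N a X i" "mt_phi N a X k" V D]
    using N by (simp add: phi_ge phi_sum D NN)
  have "norm ((1 - h * \<kappa>) *\<^sub>R (V i - V k) + (h * \<kappa>) *\<^sub>R (A i - A k))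
      \<le> (1 - h * \<kappa>) * norm (V i - V k) + (h * \<kappa>) * norm (A i - A k)"
    using h kappa by (intro order_trans[OF norm_triangle_ineq]) (simp add: abs_of_nonneg)
  also have "\<dots> \<le> (1 - h * \<kappa>) * D + (h * \<kappa>) * ((1 - c1 / c2) * D)"
    using h kappa by (intro add_mono mult_left_mono D ik dob) auto
  also have "\<dots> = (1 - h * \<kappa> * (c1 / c2)) * D" by (simp add: algebra_simps)
  finally show ?thesis unfolding e .
qed

lemma disc_decay:
  fixes Xs Vs :: "nat \<Rightarrow> 'v::euclidean_space"
  assumes h: "0 < h" "h * \<kappa> \<le> 1" and D: "\<And>i j. i < N \<Longrightarrow> j < N \<Longrightarrow> norm (Vs i - Vs j) \<le> D"
  shows "i < N \<Longrightarrow> j < N \<Longrightarrow> norm (snd (mt_disc N \<kappa> a h Xs Vs n) i - snd (mt_disc N \<kappa> a h Xs Vs n) j)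
     \<le> (1 - h * \<kappa> * (c1 / c2)) ^ n * D"
proof (induction n arbitrary: i j)
  case 0
  then show ?case using D by simp
next
  case (Suc n)
  have "norm (snd (mt_disc N \<kappa> a h Xs Vs (Suc n)) i - snd (mt_disc N \<kappa> a h Xs Vs (Suc n)) j)
     \<le> (1 - h * \<kappa> * (c1 / c2)) * ((1 - h * \<kappa> * (c1 / c2)) ^ n * D)"
    unfolding disc_snd_Suc using Suc by (intro step_contract h) auto
  then show ?case by simp
qed

end



context mtl begin

lemma alg1: "(rho::real) \<noteq> 0 \<Longrightarrow> h * (k * (x * D)) + D * (y - x) / rho = D * (y - (1 - h * k * rho) * x) / rho"
  by (simp add: field_simps)
lemma alg2: "(rho::real) \<noteq> 0 \<Longrightarrow> k \<noteq> 0 \<Longrightarrow> D * (1 - x) / (k * rho) + h * (x * D) = D * (1 - (1 - h * k * rho) * x) / (k * rho)"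
  by (simp add: field_simps)

lemma rho_pos: "0 < c1 / c2" using c1 c12 by simp
lemma rho_le1: "c1 / c2 \<le> 1" using c1 c12 by simp

lemma disc_vinc:
  fixes Xs Vs :: "nat \<Rightarrow> 'v::euclidean_space"
  assumes h: "0 < h" "h * \<kappa> \<le> 1" and D: "\<And>i j. i < N \<Longrightarrow> j < N \<Longrightarrow> norm (Vs i - Vs j) \<le> D"
    and i: "i < N"
  shows "norm (snd (mt_disc N \<kappa> a h Xs Vs (Suc n)) i - snd (mt_disc N \<kappa> a h Xs Vs n) i)
     \<le> h * (\<kappa> * ((1 - h * \<kappa> * (c1 / c2)) ^ n * D))"
proof -
  have "norm (mt_force N \<kappa> a (fst (mt_disc N \<kappa> a h Xs Vs n)) (snd (mt_disc N \<kappa> a h Xs Vs n)) i)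
      \<le> \<kappa> * ((1 - h * \<kappa> * (c1 / c2)) ^ n * D)"
    by (rule force_bound) (rule disc_decay[OF h D], auto simp: i)
  then show ?thesis unfolding disc_snd_Suc using h by (simp add: mult_left_mono)
qed

lemma disc_vtail:
  fixes Xs Vs :: "nat \<Rightarrow> 'v::euclidean_space"
  assumes h: "0 < h" "h * \<kappa> \<le> 1" and D: "\<And>i j. i < N \<Longrightarrow> j < N \<Longrightarrow> norm (Vs i - Vs j) \<le> D"
    and i: "i < N" and mn: "m \<le> n"
  shows "norm (snd (mt_disc N \<kappa> a h Xs Vs n) i - snd (mt_disc N \<kappa> a h Xs Vs m) i)
     \<le> D * ((1 - h * \<kappa> * (c1 / c2)) ^ m - (1 - h * \<kappa> * (c1 / c2)) ^ n) / (c1 / c2)"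
  using mn
proof (induction n rule: dec_induct)
  case base
  then show ?case by simp
next
  case (step n)
  define r where "r = 1 - h * \<kappa> * (c1 / c2)"
  have "norm (snd (mt_disc N \<kappa> a h Xs Vs (Suc n)) i - snd (mt_disc N \<kappa> a h Xs Vs m) i)
     \<le> norm (snd (mt_disc N \<kappa> a h Xs Vs (Suc n)) i - snd (mt_disc N \<kappa> a h Xs Vs n) i)
       + norm (snd (mt_disc N \<kappa> a h Xs Vs n) i - snd (mt_disc N \<kappa> a h Xs Vs m) i)"
    by (rule norm_diff_triangle_le[OF order_refl order_refl])
  also have "\<dots> \<le> h * (\<kappa> * (r ^ n * D)) + D * (r ^ m - r ^ n) / (c1 / c2)"
    using disc_vinc[OF h D i, where Xs=Xs and n=n] step.IH unfolding r_def by (intro add_mono) auto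
  also have "\<dots> = D * (r ^ m - r ^ Suc n) / (c1 / c2)"
    unfolding r_def power_Suc by (rule alg1) (use c1 c12 in simp)
  finally show ?case unfolding r_def .
qed

lemma disc_xdev:
  fixes Xs Vs :: "nat \<Rightarrow> 'v::euclidean_space"
  assumes h: "0 < h" "h * \<kappa> \<le> 1" and D: "\<And>i j. i < N \<Longrightarrow> j < N \<Longrightarrow> norm (Vs i - Vs j) \<le> D"
    and i: "i < N" and j: "j < N"
  shows "norm ((fst (mt_disc N \<kappa> a h Xs Vs n) i - fst (mt_disc N \<kappa> a h Xs Vs n) j) - (Xs i - Xs j))
     \<le> D * (1 - (1 - h * \<kappa> * (c1 / c2)) ^ n) / (\<kappa> * (c1 / c2))"
proof (induction n)
  case 0
  then show ?case by simp
next
  case (Suc n)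
  define r where "r = 1 - h * \<kappa> * (c1 / c2)"
  have "(fst (mt_disc N \<kappa> a h Xs Vs (Suc n)) i - fst (mt_disc N \<kappa> a h Xs Vs (Suc n)) j) - (Xs i - Xs j)
     = ((fst (mt_disc N \<kappa> a h Xs Vs n) i - fst (mt_disc N \<kappa> a h Xs Vs n) j) - (Xs i - Xs j))
       + h *\<^sub>R (snd (mt_disc N \<kappa> a h Xs Vs n) i - snd (mt_disc N \<kappa> a h Xs Vs n) j)"
    unfolding disc_fst_Suc by (simp add: algebra_simps)
  also have "norm \<dots> \<le> D * (1 - r ^ n) / (\<kappa> * (c1 / c2)) + h * (r ^ n * D)"
    using Suc.IH disc_decay[OF h D i j, where Xs=Xs and n=n] h unfolding r_def
    by (intro order_trans[OF norm_triangle_ineq] add_mono) (auto simp: mult_left_mono)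
  also have "\<dots> = D * (1 - r ^ Suc n) / (\<kappa> * (c1 / c2))"
    unfolding r_def power_Suc by (rule alg2) (use c1 c12 kappa in simp_all)
  finally show ?case unfolding r_def .
qed

end



definition mt_sol :: "nat \<Rightarrow> real \<Rightarrow> (real \<Rightarrow> real) \<Rightarrow> (real \<Rightarrow> nat \<Rightarrow> 'v::euclidean_space) \<Rightarrow> (real \<Rightarrow> nat \<Rightarrow> 'v) \<Rightarrow> bool" where
  "mt_sol N \<kappa> a x v \<longleftrightarrow> (\<forall>t\<ge>0. \<forall>i<N.
          ((\<lambda>s. x s i) has_vector_derivative v t i) (at t within {0..}) \<and>
          ((\<lambda>s. v s i) has_vector_derivative mt_force N \<kappa> a (x t) (v t) i) (at t within {0..}))"

lemma hvd_scaleR_const: "((\<lambda>s::real. s *\<^sub>R c) has_vector_derivative c) F"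
  unfolding has_vector_derivative_def
  by (rule bounded_linear_imp_has_derivative) (rule bounded_linear_scaleR_left)

context mtl begin

lemma sol_dx: "mt_sol N \<kappa> a x v \<Longrightarrow> 0 \<le> t \<Longrightarrow> i < N \<Longrightarrow> {t0..t1} \<subseteq> {0..} \<Longrightarrow> t \<in> {t0..t1} \<Longrightarrow>
   ((\<lambda>s. x s i) has_vector_derivative v t i) (at t within {t0..t1})"
  unfolding mt_sol_def by (blast intro: has_vector_derivative_within_subset)

lemma sol_dv: "mt_sol N \<kappa> a x v \<Longrightarrow> 0 \<le> t \<Longrightarrow> i < N \<Longrightarrow> {t0..t1} \<subseteq> {0..} \<Longrightarrow> t \<in> {t0..t1} \<Longrightarrow>
   ((\<lambda>s. v s i) has_vector_derivative mt_force N \<kappa> a (x t) (v t) i) (at t within {t0..t1})"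
  unfolding mt_sol_def by (blast intro: has_vector_derivative_within_subset)

lemma sol_vbound:
  fixes x v :: "real \<Rightarrow> nat \<Rightarrow> 'v::euclidean_space"
  assumes sol: "mt_sol N \<kappa> a x v"
  shows "\<exists>B\<ge>0. \<forall>s\<in>{0..T}. \<forall>i<N. norm (v s i) \<le> B"
proof -
  have cv: "continuous_on {0..T} (\<lambda>s. v s i)" if i: "i < N" for i
  proof -
    have "continuous (at s within {0..T}) (\<lambda>s. v s i)" if s: "s \<in> {0..T}" for s
      using sol_dv[OF sol _ i, of s 0 T] s by (auto intro: has_vector_derivative_continuous)
    then show ?thesis by (simp add: continuous_on_eq_continuous_within)
  qed
  define g where "g s = (\<Sum>i<N. norm (v s i))" for s
  have "continuous_on {0..T} g" unfolding g_def
    by (intro continuous_on_sum continuous_on_norm) (auto intro: cv)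
  then have "bounded (g ` {0..T})" by (intro compact_imp_bounded compact_continuous_image) auto
  then obtain B where B: "\<forall>y\<in>g ` {0..T}. norm y \<le> B" by (auto simp: bounded_iff)
  have "norm (v s i) \<le> max B 0" if "s \<in> {0..T}" "i < N" for s i
  proof -
    have "norm (v s i) \<le> g s" unfolding g_def by (rule member_le_sum) (use that in auto)
    also have "\<dots> \<le> B" using B that by force
    finally show ?thesis by simp
  qed
  then show ?thesis by (intro exI[of _ "max B 0"]) auto
qed

lemma euler:
  fixes x v :: "real \<Rightarrow> nat \<Rightarrow> 'v::euclidean_space"
  assumes sol: "mt_sol N \<kappa> a x v"
  shows "\<exists>C. \<forall>h n. 0 < h \<longrightarrow> real n * h \<le> T \<longrightarrow>
    (\<Sum>i<N. norm (fst (mt_disc N \<kappa> a h (x 0) (v 0) n) i - x (real n * h) i)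
           + norm (snd (mt_disc N \<kappa> a h (x 0) (v 0) n) i - v (real n * h) i)) \<le> C * h"
proof -
  obtain Bv where Bv0: "0 \<le> Bv" and Bv: "\<And>s i. s \<in> {0..T} \<Longrightarrow> i < N \<Longrightarrow> norm (v s i) \<le> Bv"
    using sol_vbound[OF sol, of T] by blast
  define B2 where "B2 = 2 * Bv"
  have B2: "norm (v s j - v s i) \<le> B2" if "s \<in> {0..T}" "i < N" "j < N" for s i j
    using norm_triangle_ineq4[of "v s j" "v s i"] Bv[OF that(1) that(2)] Bv[OF that(1) that(3)]
    unfolding B2_def by linarith
  have B20: "0 \<le> B2" using Bv0 B2_def by simp
  define K where "K = 2*La/c1 + 2*real N*La*c2/c1^2"
  have K0: "0 \<le> K" using La c1 c12 unfolding K_def by simp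
  have Fb: "norm (mt_force N \<kappa> a (x s) (v s) i) \<le> \<kappa> * B2" if "s \<in> {0..T}" "i < N" for s i
    by (rule force_bound) (use B2 that in auto)
  have vlip: "norm (v s i - v t i) \<le> \<kappa> * B2 * (s - t)" if "0 \<le> t" "t \<le> s" "s \<le> T" "i < N" for s t i
  proof -
    have "norm ((\<lambda>s. v s i) s - (\<lambda>s. v s i) t) \<le> \<kappa> * B2 * (s - t)"
      by (rule mvt_vec[where f'="\<lambda>r. mt_force N \<kappa> a (x r) (v r) i"])
         (use that in \<open>auto intro!: sol_dv[OF sol] Fb\<close>)
    then show ?thesis by simp
  qed
  have xlip: "norm (x s i - x t i) \<le> Bv * (s - t)" if "0 \<le> t" "t \<le> s" "s \<le> T" "i < N" for s t i
  proof -
    have "norm ((\<lambda>s. x s i) s - (\<lambda>s. x s i) t) \<le> Bv * (s - t)"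
      by (rule mvt_vec[where f'="\<lambda>r. v r i"])
         (use that in \<open>auto intro!: sol_dx[OF sol] Bv\<close>)
    then show ?thesis by simp
  qed
  define Cx where "Cx = \<kappa> * B2"
  define C1 where "C1 = \<kappa> * (real N * K * B2 * (real N * Bv) + (real N + 1) * (real N * (\<kappa> * B2)))"
  have Cx0: "0 \<le> Cx" unfolding Cx_def using kappa B20 by simp
  have C10: "0 \<le> C1" unfolding C1_def using kappa B20 K0 Bv0 by simp
  have taux: "norm (x (t + h) i - x t i - h *\<^sub>R v t i) \<le> Cx * h * h"
    if "0 \<le> t" "0 < h" "t + h \<le> T" "i < N" for t h i
  proof -
    have "norm ((\<lambda>s. x s i - s *\<^sub>R v t i) (t + h) - (\<lambda>s. x s i - s *\<^sub>R v t i) t) \<le> (Cx * h) * ((t + h) - t)"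
    proof (rule mvt_vec[where f'="\<lambda>r. v r i - v t i"])
      fix s assume s: "s \<in> {t..t + h}"
      show "((\<lambda>s. x s i - s *\<^sub>R v t i) has_vector_derivative v s i - v t i) (at s within {t..t + h})"
        by (intro has_vector_derivative_diff sol_dx[OF sol] hvd_scaleR_const) (use that s in auto)
      show "norm (v s i - v t i) \<le> Cx * h"
      proof -
        have "\<kappa> * B2 * (s - t) \<le> \<kappa> * B2 * h" using s kappa B20 by (intro mult_left_mono) auto
        then show ?thesis using vlip[of t s i] that s unfolding Cx_def by auto
      qed
    qed (use that in auto)
    then show ?thesis by (simp add: algebra_simps)
  qed
  have tauv: "norm (v (t + h) i - v t i - h *\<^sub>R mt_force N \<kappa> a (x t) (v t) i) \<le> C1 * h * h"
    if "0 \<le> t" "0 < h" "t + h \<le> T" "i < N" for t h i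
  proof -
    have "norm ((\<lambda>s. v s i - s *\<^sub>R mt_force N \<kappa> a (x t) (v t) i) (t + h) - (\<lambda>s. v s i - s *\<^sub>R mt_force N \<kappa> a (x t) (v t) i) t) \<le> (C1 * h) * ((t + h) - t)"
    proof (rule mvt_vec[where f'="\<lambda>r. mt_force N \<kappa> a (x r) (v r) i - mt_force N \<kappa> a (x t) (v t) i"])
      fix s assume s: "s \<in> {t..t + h}"
      show "((\<lambda>s. v s i - s *\<^sub>R mt_force N \<kappa> a (x t) (v t) i) has_vector_derivative
             mt_force N \<kappa> a (x s) (v s) i - mt_force N \<kappa> a (x t) (v t) i) (at s within {t..t + h})"
        by (intro has_vector_derivative_diff sol_dv[OF sol] hvd_scaleR_const) (use that s in auto)
      have "norm (mt_force N \<kappa> a (x s) (v s) i - mt_force N \<kappa> a (x t) (v t) i)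
         \<le> \<kappa> * (real N * K * B2 * (\<Sum>k<N. norm (x s k - x t k)) + (real N + 1) * (\<Sum>k<N. norm (v s k - v t k)))"
        unfolding K_def by (rule force_lip) (use that B2 in auto)
      also have "\<dots> \<le> \<kappa> * (real N * K * B2 * (real N * (Bv * h)) + (real N + 1) * (real N * (\<kappa> * B2 * h)))"
      proof -
        have m1: "Bv * (s - t) \<le> Bv * h" using s Bv0 by (intro mult_left_mono) auto
        have m2: "\<kappa> * B2 * (s - t) \<le> \<kappa> * B2 * h" using s kappa B20 by (intro mult_left_mono) auto
        have "(\<Sum>k<N. norm (x s k - x t k)) \<le> (\<Sum>k<N. Bv * h)"
          by (rule sum_mono) (use xlip[of t s] that s m1 in \<open>fastforce\<close>)
        moreover have "(\<Sum>k<N. norm (v s k - v t k)) \<le> (\<Sum>k<N. \<kappa> * B2 * h)"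
          by (rule sum_mono) (use vlip[of t s] that s m2 in \<open>fastforce\<close>)
        ultimately show ?thesis using kappa K0 B20
          by (intro mult_left_mono add_mono) (auto intro: mult_left_mono)
      qed
      also have "\<dots> = C1 * h" unfolding C1_def by (simp add: algebra_simps)
      finally show "norm (mt_force N \<kappa> a (x s) (v s) i - mt_force N \<kappa> a (x t) (v t) i) \<le> C1 * h" .
    qed (use that in auto)
    then show ?thesis by (simp add: algebra_simps)
  qed
  define L where "L = 1 + real N * \<kappa> * (real N * K * B2 + (real N + 1))"
  define C2 where "C2 = real N * (Cx + C1)"
  have L0: "0 \<le> L" unfolding L_def using kappa K0 B20 by simp
  have C20: "0 \<le> C2" unfolding C2_def using Cx0 C10 by simp
  show ?thesis
  proof (intro exI[of _ "C2 * T * exp (L * T)"] allI impI)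
    fix h :: real and n :: nat
    assume h: "0 < h" and nT: "real n * h \<le> T"
    define XD where "XD n = fst (mt_disc N \<kappa> a h (x 0) (v 0) n)" for n
    define VD where "VD n = snd (mt_disc N \<kappa> a h (x 0) (v 0) n)" for n
    define ex where "ex n = (\<Sum>i<N. norm (XD n i - x (real n * h) i))" for n
    define evs where "evs n = (\<Sum>i<N. norm (VD n i - v (real n * h) i))" for n
    have ex0: "0 \<le> ex n" for n unfolding ex_def by (simp add: sum_nonneg)
    have evs0: "0 \<le> evs n" for n unfolding evs_def by (simp add: sum_nonneg)
    have step: "ex (Suc n) + evs (Suc n) \<le> (1 + h * L) * (ex n + evs n) + C2 * h * h"
      if nT: "real (Suc n) * h \<le> T" for n
    proof -
      define t where "t = real n * h"
      have t0: "0 \<le> t" unfolding t_def using h by simp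
      have tT: "t + h \<le> T" using nT unfolding t_def by (simp add: algebra_simps)
      have tS: "real (Suc n) * h = t + h" unfolding t_def by (simp add: algebra_simps)
      have xi: "norm (XD (Suc n) i - x (t + h) i) \<le> norm (XD n i - x t i) + h * norm (VD n i - v t i) + Cx * h * h"
        if i: "i < N" for i
      proof -
        have "XD (Suc n) i - x (t + h) i = (XD n i - x t i) + h *\<^sub>R (VD n i - v t i) - (x (t + h) i - x t i - h *\<^sub>R v t i)"
          unfolding XD_def VD_def disc_fst_Suc by (simp add: algebra_simps)
        also have "norm \<dots> \<le> norm (XD n i - x t i) + norm (h *\<^sub>R (VD n i - v t i)) + norm (x (t + h) i - x t i - h *\<^sub>R v t i)"
          by (intro order_trans[OF norm_triangle_ineq4] add_mono norm_triangle_ineq order_refl)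
        also have "\<dots> \<le> norm (XD n i - x t i) + h * norm (VD n i - v t i) + Cx * h * h"
          using taux[OF t0 h tT i] h by simp
        finally show ?thesis .
      qed
      have vi: "norm (VD (Suc n) i - v (t + h) i) \<le> norm (VD n i - v t i) + h * (\<kappa> * (real N * K * B2 * ex n + (real N + 1) * evs n)) + C1 * h * h"
        if i: "i < N" for i
      proof -
        have "VD (Suc n) i - v (t + h) i = (VD n i - v t i) + h *\<^sub>R (mt_force N \<kappa> a (XD n) (VD n) i - mt_force N \<kappa> a (x t) (v t) i)
             - (v (t + h) i - v t i - h *\<^sub>R mt_force N \<kappa> a (x t) (v t) i)"
          unfolding XD_def VD_def disc_snd_Suc by (simp add: algebra_simps)
        also have "norm \<dots> \<le> norm (VD n i - v t i) + norm (h *\<^sub>R (mt_force N \<kappa> a (XD n) (VD n) i - mt_force N \<kappa> a (x t) (v t) i))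
             + norm (v (t + h) i - v t i - h *\<^sub>R mt_force N \<kappa> a (x t) (v t) i)"
          by (intro order_trans[OF norm_triangle_ineq4] add_mono norm_triangle_ineq order_refl)
        also have "norm (h *\<^sub>R (mt_force N \<kappa> a (XD n) (VD n) i - mt_force N \<kappa> a (x t) (v t) i))
            \<le> h * (\<kappa> * (real N * K * B2 * ex n + (real N + 1) * evs n))"
        proof -
          have "norm (mt_force N \<kappa> a (XD n) (VD n) i - mt_force N \<kappa> a (x t) (v t) i)
             \<le> \<kappa> * (real N * K * B2 * ex n + (real N + 1) * evs n)"
            unfolding K_def ex_def evs_def t_def by (rule force_lip) (use i B2 t0 tT h t_def in auto)
          then show ?thesis using h by (simp add: mult_left_mono)
        qed
        also have "norm (v (t + h) i - v t i - h *\<^sub>R mt_force N \<kappa> a (x t) (v t) i) \<le> C1 * h * h"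
          by (rule tauv[OF t0 h tT i])
        finally show ?thesis by simp
      qed
      have "ex (Suc n) + evs (Suc n) = (\<Sum>i<N. norm (XD (Suc n) i - x (t + h) i)) + (\<Sum>i<N. norm (VD (Suc n) i - v (t + h) i))"
        unfolding ex_def evs_def tS by simp
      also have "\<dots> \<le> (\<Sum>i<N. norm (XD n i - x t i) + h * norm (VD n i - v t i) + Cx * h * h)
           + (\<Sum>i<N. norm (VD n i - v t i) + h * (\<kappa> * (real N * K * B2 * ex n + (real N + 1) * evs n)) + C1 * h * h)"
        by (intro add_mono sum_mono xi vi) auto
      also have "\<dots> = ex n + h * evs n + real N * Cx * h * h + evs n + real N * h * (\<kappa> * (real N * K * B2 * ex n + (real N + 1) * evs n)) + real N * C1 * h * h"
        unfolding ex_def evs_def t_def by (simp add: sum.distrib sum_distrib_left[symmetric])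
      also have "\<dots> \<le> (1 + h * L) * (ex n + evs n) + C2 * h * h"
      proof -
        have a1: "h * evs n \<le> h * (ex n + evs n)" using h ex0 by (simp add: mult_left_mono)
        have a2: "real N * h * (\<kappa> * (real N * K * B2 * ex n + (real N + 1) * evs n))
             \<le> real N * h * (\<kappa> * (real N * K * B2 * (ex n + evs n) + (real N + 1) * (ex n + evs n)))"
          using h kappa ex0 evs0 K0 B20
          by (intro mult_left_mono add_mono) (auto intro!: mult_nonneg_nonneg)
        have "(1 + h * L) * (ex n + evs n) + C2 * h * h
           = ex n + evs n + h * (ex n + evs n) + real N * h * (\<kappa> * (real N * K * B2 * (ex n + evs n) + (real N + 1) * (ex n + evs n)))
             + real N * Cx * h * h + real N * C1 * h * h"
          unfolding L_def C2_def by (simp add: algebra_simps)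
        then show ?thesis using a1 a2 by linarith
      qed
      finally show ?thesis .
    qed
    have ind: "real n * h \<le> T \<Longrightarrow> ex n + evs n \<le> C2 * h * (real n * h) * (1 + h * L) ^ n" for n
    proof (induction n)
      case 0
      then show ?case unfolding ex_def evs_def XD_def VD_def by simp
    next
      case (Suc n)
      have nT': "real n * h \<le> T" using Suc.prems h by (simp add: algebra_simps)
      have q0: "0 \<le> 1 + h * L" using h L0 by simp
      have q1: "1 \<le> (1 + h * L) ^ Suc n" using h L0 by (intro one_le_power) simp
      have "ex (Suc n) + evs (Suc n) \<le> (1 + h * L) * (C2 * h * (real n * h) * (1 + h * L) ^ n) + C2 * h * h"
        using step[OF Suc.prems] Suc.IH[OF nT'] q0 by (meson add_mono order_refl mult_left_mono order_trans)
      also have "\<dots> = C2 * h * (real n * h) * (1 + h * L) ^ Suc n + C2 * h * h" by simp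
      also have "\<dots> \<le> C2 * h * (real n * h) * (1 + h * L) ^ Suc n + C2 * h * h * (1 + h * L) ^ Suc n"
      proof -
        have "C2 * h * h * 1 \<le> C2 * h * h * (1 + h * L) ^ Suc n"
          using q1 C20 h by (intro mult_left_mono) auto
        then show ?thesis by simp
      qed
      also have "\<dots> = C2 * h * (real (Suc n) * h) * (1 + h * L) ^ Suc n" by (simp add: algebra_simps)
      finally show ?case .
    qed
    have pw: "(1 + h * L) ^ n \<le> exp (L * T)"
    proof -
      have "(1 + h * L) ^ n \<le> exp (h * L) ^ n" using h L0 by (intro power_mono) auto
      also have "\<dots> = exp (real n * (h * L))" by (simp add: exp_of_nat_mult)
      also have "\<dots> \<le> exp (L * T)"
      proof -
        have "L * (real n * h) \<le> L * T" using nT L0 by (rule mult_left_mono)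
        then show ?thesis by (simp add: algebra_simps)
      qed
      finally show ?thesis .
    qed
    have "ex n + evs n \<le> C2 * h * (real n * h) * (1 + h * L) ^ n" by (rule ind[OF nT])
    also have "\<dots> \<le> C2 * h * T * exp (L * T)"
    proof -
      have T0: "0 \<le> T" using nT h by (meson mult_nonneg_nonneg of_nat_0_le_iff less_imp_le order_trans)
      have "0 \<le> (1 + h * L) ^ n" using h L0 by simp
      then show ?thesis using C20 h nT pw T0 by (intro mult_mono) (auto intro!: mult_nonneg_nonneg)
    qed
    finally have "ex n + evs n \<le> C2 * T * exp (L * T) * h" by (simp add: algebra_simps)
    then show "(\<Sum>i<N. norm (fst (mt_disc N \<kappa> a h (x 0) (v 0) n) i - x (real n * h) i)
           + norm (snd (mt_disc N \<kappa> a h (x 0) (v 0) n) i - v (real n * h) i)) \<le> C2 * T * exp (L * T) * h"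
      unfolding ex_def evs_def XD_def VD_def by (simp add: sum.distrib)
  qed
qed

end



context mtl begin

lemma approx_at:
  fixes x v :: "real \<Rightarrow> nat \<Rightarrow> 'v::euclidean_space"
  assumes sol: "mt_sol N \<kappa> a x v" and t: "0 < t" and e: "0 < \<epsilon>" and h0: "0 < h0"
  shows "\<exists>m h. 0 < h \<and> h < h0 \<and> h * \<kappa> \<le> 1 \<and> real m * h = t \<and>
    (\<forall>i<N. norm (fst (mt_disc N \<kappa> a h (x 0) (v 0) m) i - x t i) \<le> \<epsilon> \<and>
            norm (snd (mt_disc N \<kappa> a h (x 0) (v 0) m) i - v t i) \<le> \<epsilon>)"
proof -
  obtain C where C: "\<And>h n. 0 < h \<Longrightarrow> real n * h \<le> t \<Longrightarrow>
    (\<Sum>i<N. norm (fst (mt_disc N \<kappa> a h (x 0) (v 0) n) i - x (real n * h) i)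
           + norm (snd (mt_disc N \<kappa> a h (x 0) (v 0) n) i - v (real n * h) i)) \<le> C * h"
    using euler[OF sol, of t] by blast
  obtain m :: nat where m: "max 1 (max (t / h0) (max (t * \<kappa>) (\<bar>C\<bar> * t / \<epsilon>))) < real m"
    using reals_Archimedean2 by blast
  have m0: "0 < real m" using m by linarith
  define h where "h = t / real m"
  have hp: "0 < h" unfolding h_def using t m0 by simp
  have mh: "real m * h = t" unfolding h_def using m0 by simp
  have hh0: "h < h0"
  proof -
    have "t / h0 < real m" using m by linarith
    then have "t < real m * h0" using h0 by (simp add: divide_less_eq mult.commute)
    then show ?thesis unfolding h_def using m0 by (simp add: divide_less_eq mult.commute)
  qed
  have hk: "h * \<kappa> \<le> 1"
  proof -
    have "t * \<kappa> < real m" using m by linarith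
    then show ?thesis unfolding h_def using m0 by (simp add: field_simps)
  qed
  have Ch: "C * h \<le> \<epsilon>"
  proof -
    have "\<bar>C\<bar> * t / \<epsilon> < real m" using m by linarith
    then have "\<bar>C\<bar> * t < real m * \<epsilon>" using e by (simp add: divide_less_eq mult.commute)
    then have "\<bar>C\<bar> * h \<le> \<epsilon>" unfolding h_def using m0 by (simp add: field_simps)
    moreover have "C * h \<le> \<bar>C\<bar> * h" using hp by (simp add: mult_right_mono)
    ultimately show ?thesis by linarith
  qed
  have S: "(\<Sum>i<N. norm (fst (mt_disc N \<kappa> a h (x 0) (v 0) m) i - x t i)
           + norm (snd (mt_disc N \<kappa> a h (x 0) (v 0) m) i - v t i)) \<le> \<epsilon>"
    using C[OF hp, of m] mh Ch by simp
  have "norm (fst (mt_disc N \<kappa> a h (x 0) (v 0) m) i - x t i) \<le> \<epsilon> \<and>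
            norm (snd (mt_disc N \<kappa> a h (x 0) (v 0) m) i - v t i) \<le> \<epsilon>" if i: "i < N" for i
  proof -
    have "norm (fst (mt_disc N \<kappa> a h (x 0) (v 0) m) i - x t i)
           + norm (snd (mt_disc N \<kappa> a h (x 0) (v 0) m) i - v t i) \<le> \<epsilon>"
      using S member_le_sum[of i "{..<N}" "\<lambda>i. norm (fst (mt_disc N \<kappa> a h (x 0) (v 0) m) i - x t i)
           + norm (snd (mt_disc N \<kappa> a h (x 0) (v 0) m) i - v t i)"] i by auto
    then show ?thesis by (smt (verit) norm_ge_zero)
  qed
  then show ?thesis using hp hh0 hk mh by blast
qed

lemma r_bounds:
  assumes "0 < h" "h * \<kappa> \<le> 1"
  shows "0 \<le> 1 - h * \<kappa> * (c1 / c2)" "1 - h * \<kappa> * (c1 / c2) \<le> 1"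
    "(1 - h * \<kappa> * (c1 / c2)) ^ m \<le> exp (- (\<kappa> * (c1 / c2)) * (real m * h))"
proof -
  have "h * \<kappa> * (c1 / c2) \<le> 1 * 1" using assms rho_le1 rho_pos kappa
    by (intro mult_mono) auto
  then show r0: "0 \<le> 1 - h * \<kappa> * (c1 / c2)" by simp
  have "0 \<le> h * \<kappa> * (c1 / c2)"
    by (rule mult_nonneg_nonneg[OF mult_nonneg_nonneg less_imp_le[OF rho_pos]]) (use assms kappa in auto)
  then show "1 - h * \<kappa> * (c1 / c2) \<le> 1" by simp
  have "(1 - h * \<kappa> * (c1 / c2)) ^ m \<le> exp (- (h * \<kappa> * (c1 / c2))) ^ m"
    using r0 exp_ge_add_one_self[of "- (h * \<kappa> * (c1 / c2))"] by (intro power_mono) auto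
  also have "\<dots> = exp (real m * (- (h * \<kappa> * (c1 / c2))))" by (simp only: exp_of_nat_mult)
  finally show "(1 - h * \<kappa> * (c1 / c2)) ^ m \<le> exp (- (\<kappa> * (c1 / c2)) * (real m * h))"
    by (simp add: algebra_simps)
qed

lemma D_nonneg: "(\<And>i j. i < N \<Longrightarrow> j < N \<Longrightarrow> norm (V0 i - V0 j) \<le> D) \<Longrightarrow> 0 \<le> (D::real)"
  using N by (metis norm_ge_zero order_trans less_le_trans zero_less_one)

lemma cont_decay:
  fixes x v :: "real \<Rightarrow> nat \<Rightarrow> 'v::euclidean_space"
  assumes sol: "mt_sol N \<kappa> a x v" and D: "\<And>i j. i < N \<Longrightarrow> j < N \<Longrightarrow> norm (v 0 i - v 0 j) \<le> D"
    and t: "0 \<le> t" and i: "i < N" and j: "j < N"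
  shows "norm (v t i - v t j) \<le> exp (- (\<kappa> * (c1 / c2)) * t) * D"
proof (cases "t = 0")
  case True
  then show ?thesis using D i j by simp
next
  case False
  then have t: "0 < t" using t by simp
  have D0: "0 \<le> D" by (rule D_nonneg[OF D])
  show ?thesis
  proof (rule field_le_epsilon)
    fix e :: real assume e: "0 < e"
    obtain m h where hp: "0 < h" and hk: "h * \<kappa> \<le> 1" and mh: "real m * h = t"
      and ap: "\<And>i. i < N \<Longrightarrow> norm (snd (mt_disc N \<kappa> a h (x 0) (v 0) m) i - v t i) \<le> e / 2"
      using approx_at[OF sol t, of "e/2" 1] e by auto
    let ?V = "snd (mt_disc N \<kappa> a h (x 0) (v 0) m)"
    have eq: "v t i - v t j = (?V i - ?V j) - (?V i - v t i) + (?V j - v t j)" by (simp add: algebra_simps)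
    have "norm (v t i - v t j) \<le> norm (?V i - ?V j) + norm (?V i - v t i) + norm (?V j - v t j)"
      unfolding eq by (intro order_trans[OF norm_triangle_ineq] add_mono norm_triangle_ineq4 order_refl)
    also have "\<dots> \<le> (1 - h * \<kappa> * (c1 / c2)) ^ m * D + e / 2 + e / 2"
      using disc_decay[OF hp hk D i j] ap i j by (intro add_mono) auto
    also have "(1 - h * \<kappa> * (c1 / c2)) ^ m * D \<le> exp (- (\<kappa> * (c1 / c2)) * t) * D"
      using r_bounds(3)[OF hp hk, of m] mh D0 by (intro mult_right_mono) auto
    finally show "norm (v t i - v t j) \<le> exp (- (\<kappa> * (c1 / c2)) * t) * D + e" by simp
  qed
qed

lemma cont_xdev:
  fixes x v :: "real \<Rightarrow> nat \<Rightarrow> 'v::euclidean_space"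
  assumes sol: "mt_sol N \<kappa> a x v" and D: "\<And>i j. i < N \<Longrightarrow> j < N \<Longrightarrow> norm (v 0 i - v 0 j) \<le> D"
    and t: "0 \<le> t" and i: "i < N" and j: "j < N"
  shows "norm ((x t i - x t j) - (x 0 i - x 0 j)) \<le> D / (\<kappa> * (c1 / c2))"
proof -
  have D0: "0 \<le> D" by (rule D_nonneg[OF D])
  have q0: "0 \<le> D / (\<kappa> * (c1 / c2))"
    by (rule divide_nonneg_nonneg[OF D0 mult_nonneg_nonneg[OF less_imp_le[OF kappa] less_imp_le[OF rho_pos]]])
  show ?thesis
  proof (cases "t = 0")
    case True
    then show ?thesis using q0 by simp
  next
    case False
    then have t: "0 < t" using t by simp
    show ?thesis
    proof (rule field_le_epsilon)
      fix e :: real assume e: "0 < e"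
      obtain m h where hp: "0 < h" and hk: "h * \<kappa> \<le> 1" and mh: "real m * h = t"
        and ap: "\<And>i. i < N \<Longrightarrow> norm (fst (mt_disc N \<kappa> a h (x 0) (v 0) m) i - x t i) \<le> e / 2"
        using approx_at[OF sol t, of "e/2" 1] e by auto
      let ?X = "fst (mt_disc N \<kappa> a h (x 0) (v 0) m)"
      have eq: "(x t i - x t j) - (x 0 i - x 0 j) = ((?X i - ?X j) - (x 0 i - x 0 j)) - (?X i - x t i) + (?X j - x t j)"
        by (simp add: algebra_simps)
      have "norm ((x t i - x t j) - (x 0 i - x 0 j)) \<le> norm ((?X i - ?X j) - (x 0 i - x 0 j)) + norm (?X i - x t i) + norm (?X j - x t j)"
        unfolding eq by (intro order_trans[OF norm_triangle_ineq] add_mono norm_triangle_ineq4 order_refl)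
      also have "\<dots> \<le> D * (1 - (1 - h * \<kappa> * (c1 / c2)) ^ m) / (\<kappa> * (c1 / c2)) + e / 2 + e / 2"
        using disc_xdev[OF hp hk D i j] ap i j by (intro add_mono) auto
      also have "D * (1 - (1 - h * \<kappa> * (c1 / c2)) ^ m) / (\<kappa> * (c1 / c2)) \<le> D / (\<kappa> * (c1 / c2))"
      proof -
        have "0 \<le> (1 - h * \<kappa> * (c1 / c2)) ^ m" using r_bounds(1)[OF hp hk] by simp
        then have "D * (1 - (1 - h * \<kappa> * (c1 / c2)) ^ m) \<le> D * 1" using D0 by (intro mult_left_mono) auto
        then show ?thesis using divide_right_mono[OF _ mult_nonneg_nonneg[OF less_imp_le[OF kappa] less_imp_le[OF rho_pos]]] by simp
      qed
      finally show "norm ((x t i - x t j) - (x 0 i - x 0 j)) \<le> D / (\<kappa> * (c1 / c2)) + e" by simp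
    qed
  qed
qed

lemma cont_vdev:
  fixes x v :: "real \<Rightarrow> nat \<Rightarrow> 'v::euclidean_space"
  assumes sol: "mt_sol N \<kappa> a x v" and D: "\<And>i j. i < N \<Longrightarrow> j < N \<Longrightarrow> norm (v 0 i - v 0 j) \<le> D"
    and t: "0 \<le> t" and i: "i < N"
  shows "norm (v t i - v 0 i) \<le> D / (c1 / c2)"
proof -
  have D0: "0 \<le> D" by (rule D_nonneg[OF D])
  have q0: "0 \<le> D / (c1 / c2)"
    by (rule divide_nonneg_nonneg[OF D0 less_imp_le[OF rho_pos]])
  show ?thesis
  proof (cases "t = 0")
    case True
    then show ?thesis using q0 by simp
  next
    case False
    then have t: "0 < t" using t by simp
    show ?thesis
    proof (rule field_le_epsilon)
      fix e :: real assume e: "0 < e"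
      obtain m h where hp: "0 < h" and hk: "h * \<kappa> \<le> 1" and mh: "real m * h = t"
        and ap: "\<And>i. i < N \<Longrightarrow> norm (snd (mt_disc N \<kappa> a h (x 0) (v 0) m) i - v t i) \<le> e"
        using approx_at[OF sol t e, of 1] by auto
      let ?V = "snd (mt_disc N \<kappa> a h (x 0) (v 0) m)"
      have eq: "v t i - v 0 i = (?V i - snd (mt_disc N \<kappa> a h (x 0) (v 0) 0) i) - (?V i - v t i)" by simp
      have "norm (v t i - v 0 i) \<le> norm (?V i - snd (mt_disc N \<kappa> a h (x 0) (v 0) 0) i) + norm (?V i - v t i)"
        unfolding eq by (rule norm_triangle_ineq4)
      also have "\<dots> \<le> D * ((1 - h * \<kappa> * (c1 / c2)) ^ 0 - (1 - h * \<kappa> * (c1 / c2)) ^ m) / (c1 / c2) + e"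
        using disc_vtail[OF hp hk D i, where m=0 and n=m] ap i by (intro add_mono) auto
      also have "D * ((1 - h * \<kappa> * (c1 / c2)) ^ 0 - (1 - h * \<kappa> * (c1 / c2)) ^ m) / (c1 / c2) \<le> D / (c1 / c2)"
      proof -
        have "0 \<le> (1 - h * \<kappa> * (c1 / c2)) ^ m" using r_bounds(1)[OF hp hk] by simp
        then have "D * (1 - (1 - h * \<kappa> * (c1 / c2)) ^ m) \<le> D * 1" using D0 by (intro mult_left_mono) auto
        then show ?thesis using divide_right_mono[OF _ less_imp_le[OF rho_pos]] by simp
      qed
      finally show "norm (v t i - v 0 i) \<le> D / (c1 / c2) + e" by simp
    qed
  qed
qed

lemma shift_sol:
  fixes x v :: "real \<Rightarrow> nat \<Rightarrow> 'v::euclidean_space"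
  assumes sol: "mt_sol N \<kappa> a x v" and s: "0 \<le> s"
  shows "mt_sol N \<kappa> a (\<lambda>r. x (s + r)) (\<lambda>r. v (s + r))"
  unfolding mt_sol_def
proof (intro allI impI conjI)
  fix t :: real and i assume t: "0 \<le> t" and i: "i < N"
  have sh: "((\<lambda>r. s + r) has_vector_derivative 1) (at t within {0..})"
    by (auto intro!: derivative_eq_intros)
  have im: "(\<lambda>r. s + r) ` {0..} \<subseteq> {0..}" using s by auto
  have dx: "((\<lambda>r. x r i) has_vector_derivative v (s + t) i) (at (s + t) within (\<lambda>r. s + r) ` {0..})"
    using sol s t i unfolding mt_sol_def by (meson add_nonneg_nonneg has_vector_derivative_within_subset im)
  have dv: "((\<lambda>r. v r i) has_vector_derivative mt_force N \<kappa> a (x (s + t)) (v (s + t)) i) (at (s + t) within (\<lambda>r. s + r) ` {0..})"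
    using sol s t i unfolding mt_sol_def by (meson add_nonneg_nonneg has_vector_derivative_within_subset im)
  show "((\<lambda>r. x (s + r) i) has_vector_derivative v (s + t) i) (at t within {0..})"
    using vector_diff_chain_within[OF sh dx] by (simp add: o_def)
  show "((\<lambda>r. v (s + r) i) has_vector_derivative mt_force N \<kappa> a (x (s + t)) (v (s + t)) i) (at t within {0..})"
    using vector_diff_chain_within[OF sh dv] by (simp add: o_def)
qed

end



context mtl begin

lemma pos_uniform:
  fixes x v :: "real \<Rightarrow> nat \<Rightarrow> 'v::euclidean_space"
  assumes sol: "mt_sol N \<kappa> a x v" and D: "\<And>i j. i < N \<Longrightarrow> j < N \<Longrightarrow> norm (v 0 i - v 0 j) \<le> D"
    and hp: "0 < h" and hk: "h * \<kappa> \<le> 1" and i: "i < N" and j: "j < N"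
  shows "norm ((fst (mt_disc N \<kappa> a h (x 0) (v 0) n) i - fst (mt_disc N \<kappa> a h (x 0) (v 0) n) j)
               - (x (real n * h) i - x (real n * h) j)) \<le> 2 * D / (\<kappa> * (c1 / c2))"
proof -
  let ?X = "fst (mt_disc N \<kappa> a h (x 0) (v 0) n)"
  let ?t = "real n * h"
  have D0: "0 \<le> D" by (rule D_nonneg[OF D])
  have eq: "(?X i - ?X j) - (x ?t i - x ?t j) = ((?X i - ?X j) - (x 0 i - x 0 j)) - ((x ?t i - x ?t j) - (x 0 i - x 0 j))"
    by simp
  have "norm ((?X i - ?X j) - (x ?t i - x ?t j)) \<le> norm ((?X i - ?X j) - (x 0 i - x 0 j)) + norm ((x ?t i - x ?t j) - (x 0 i - x 0 j))"
    unfolding eq by (rule norm_triangle_ineq4)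
  also have "\<dots> \<le> D * (1 - (1 - h * \<kappa> * (c1 / c2)) ^ n) / (\<kappa> * (c1 / c2)) + D / (\<kappa> * (c1 / c2))"
    using disc_xdev[OF hp hk D i j, where n=n] cont_xdev[OF sol D _ i j, of ?t] hp by (intro add_mono) auto
  also have "D * (1 - (1 - h * \<kappa> * (c1 / c2)) ^ n) / (\<kappa> * (c1 / c2)) \<le> D / (\<kappa> * (c1 / c2))"
  proof -
    have "0 \<le> (1 - h * \<kappa> * (c1 / c2)) ^ n" using r_bounds(1)[OF hp hk] by simp
    then have "D * (1 - (1 - h * \<kappa> * (c1 / c2)) ^ n) \<le> D * 1" using D0 by (intro mult_left_mono) auto
    then show ?thesis using divide_right_mono[OF _ mult_nonneg_nonneg[OF less_imp_le[OF kappa] less_imp_le[OF rho_pos]]] by simp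
  qed
  finally show ?thesis by simp
qed

lemma vel_uniform:
  fixes x v :: "real \<Rightarrow> nat \<Rightarrow> 'v::euclidean_space"
  assumes sol: "mt_sol N \<kappa> a x v" and D: "\<And>i j. i < N \<Longrightarrow> j < N \<Longrightarrow> norm (v 0 i - v 0 j) \<le> D"
    and e: "0 < e"
  shows "\<exists>h0>0. \<forall>h. 0 < h \<and> h < h0 \<longrightarrow> (\<forall>n i. i < N \<longrightarrow>
     norm (snd (mt_disc N \<kappa> a h (x 0) (v 0) n) i - v (real n * h) i) \<le> 3 * e)"
proof -
  define \<rho> where "\<rho> = c1 / c2"
  define lam where "lam = \<kappa> * \<rho>"
  have rp: "0 < \<rho>" unfolding \<rho>_def by (rule rho_pos)
  have lp: "0 < lam" unfolding lam_def using rp kappa by simp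
  have D0: "0 \<le> D" by (rule D_nonneg[OF D])
  define u where "u = D / (\<rho> * e * lam) + 1"
  have "0 \<le> D / (\<rho> * e * lam)" using D0 rp e lp by (intro divide_nonneg_pos) auto
  then have u0: "0 < u" unfolding u_def by simp
  define T where "T = u + 1"
  have tailb: "exp (- lam * s) * D / \<rho> \<le> e" if s: "T - 1 \<le> s" for s
  proof -
    have "1 + lam * u \<le> exp (lam * u)" by (rule exp_ge_add_one_self)
    have "exp (- lam * s) \<le> exp (- lam * u)" using s lp unfolding T_def by simp
    also have "\<dots> = 1 / exp (lam * u)" by (simp add: exp_minus field_simps)
    also have "\<dots> \<le> 1 / (1 + lam * u)" using lp u0 \<open>1 + lam * u \<le> exp (lam * u)\<close>
      by (intro divide_left_mono) (auto intro!: mult_pos_pos add_pos_pos)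
    finally have ex: "exp (- lam * s) \<le> 1 / (1 + lam * u)" .
    have "exp (- lam * s) * D / \<rho> \<le> 1 / (1 + lam * u) * D / \<rho>"
      using ex D0 rp by (intro divide_right_mono mult_right_mono) auto
    also have "\<dots> \<le> e"
    proof -
      have "D \<le> e * \<rho> * (lam * u)"
      proof -
        have "e * \<rho> * (lam * u) = D + e * \<rho> * lam" unfolding u_def using rp e lp by (simp add: field_simps)
        then show ?thesis using rp e lp by simp
      qed
      moreover have "0 < \<rho> * e" using rp e by simp
      ultimately have "D \<le> e * \<rho> * (1 + lam * u)" by (simp add: algebra_simps)
      moreover have qp: "0 < \<rho> * (1 + lam * u)" using rp lp u0 by (intro mult_pos_pos add_pos_pos) auto
      moreover have "1 / (1 + lam * u) * D / \<rho> = D / (\<rho> * (1 + lam * u))" by simp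
      ultimately show ?thesis by (simp add: pos_divide_le_eq mult.commute mult.left_commute)
    qed
    finally show ?thesis .
  qed
  obtain C where C: "\<And>h n. 0 < h \<Longrightarrow> real n * h \<le> T \<Longrightarrow>
    (\<Sum>i<N. norm (fst (mt_disc N \<kappa> a h (x 0) (v 0) n) i - x (real n * h) i)
           + norm (snd (mt_disc N \<kappa> a h (x 0) (v 0) n) i - v (real n * h) i)) \<le> C * h"
    using euler[OF sol, of T] by blast
  define h0 where "h0 = min 1 (min (1 / \<kappa>) (e / (\<bar>C\<bar> + 1)))"
  have h0p: "0 < h0" unfolding h0_def using kappa e by simp
  have eul: "norm (snd (mt_disc N \<kappa> a h (x 0) (v 0) n) i - v (real n * h) i) \<le> e"
    if hp: "0 < h" and hh: "h < h0" and nT: "real n * h \<le> T" and i: "i < N" for h n i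
  proof -
    have "norm (snd (mt_disc N \<kappa> a h (x 0) (v 0) n) i - v (real n * h) i)
       \<le> (\<Sum>i<N. norm (fst (mt_disc N \<kappa> a h (x 0) (v 0) n) i - x (real n * h) i)
           + norm (snd (mt_disc N \<kappa> a h (x 0) (v 0) n) i - v (real n * h) i))"
    proof -
      have "norm (fst (mt_disc N \<kappa> a h (x 0) (v 0) n) i - x (real n * h) i)
           + norm (snd (mt_disc N \<kappa> a h (x 0) (v 0) n) i - v (real n * h) i)
         \<le> (\<Sum>i<N. norm (fst (mt_disc N \<kappa> a h (x 0) (v 0) n) i - x (real n * h) i)
           + norm (snd (mt_disc N \<kappa> a h (x 0) (v 0) n) i - v (real n * h) i))"
        by (rule member_le_sum) (use i in auto)
      moreover have "0 \<le> norm (fst (mt_disc N \<kappa> a h (x 0) (v 0) n) i - x (real n * h) i)" by simp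
      ultimately show ?thesis by linarith
    qed
    also have "\<dots> \<le> C * h" by (rule C[OF hp nT])
    also have "\<dots> \<le> e"
    proof -
      have "h < e / (\<bar>C\<bar> + 1)" using hh unfolding h0_def by simp
      then have "h * (\<bar>C\<bar> + 1) < e" by (simp add: field_simps)
      then have "\<bar>C\<bar> * h \<le> e" using hp by (simp add: algebra_simps)
      moreover have "C * h \<le> \<bar>C\<bar> * h" using hp by (simp add: mult_right_mono)
      ultimately show ?thesis by linarith
    qed
    finally show ?thesis .
  qed
  show ?thesis
  proof (intro exI[of _ h0] conjI h0p allI impI)
    fix h n i assume hh: "0 < h \<and> h < h0" and i: "i < N"
    then have hp: "0 < h" and hh0: "h < h0" by auto
    have h1: "h < 1" using hh0 unfolding h0_def by simp
    have hk: "h * \<kappa> \<le> 1"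
    proof -
      have "h < 1 / \<kappa>" using hh0 unfolding h0_def by simp
      then show ?thesis using kappa by (simp add: field_simps)
    qed
    show "norm (snd (mt_disc N \<kappa> a h (x 0) (v 0) n) i - v (real n * h) i) \<le> 3 * e"
    proof (cases "real n * h \<le> T")
      case True
      then show ?thesis using eul[OF hp hh0 True i] e by simp
    next
      case False
      define m where "m = nat \<lfloor>T / h\<rfloor>"
      have T0: "0 \<le> T" unfolding T_def using u0 by simp
      have fl0: "0 \<le> \<lfloor>T / h\<rfloor>" using T0 hp by simp
      have rm: "real m = real_of_int \<lfloor>T / h\<rfloor>" unfolding m_def using fl0 by simp
      have mle: "real m \<le> T / h" using rm by simp
      have mgt: "T / h - 1 < real m" using rm by simp
      have mhT: "real m * h \<le> T" using mle hp by (simp add: field_simps)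
      have mhT1: "T - 1 \<le> real m * h"
      proof -
        have "T - h < real m * h" using mgt hp by (simp add: field_simps)
        then show ?thesis using h1 by simp
      qed
      have mn: "m \<le> n"
      proof -
        have "real m * h < real n * h" using mhT False by simp
        then show ?thesis using hp by simp
      qed
      let ?V = "\<lambda>k. snd (mt_disc N \<kappa> a h (x 0) (v 0) k)"
      define s where "s = real m * h"
      have s0: "0 \<le> s" unfolding s_def using hp by simp
      have ta: "norm (?V n i - ?V m i) \<le> e"
      proof -
        have "norm (?V n i - ?V m i) \<le> D * ((1 - h * \<kappa> * (c1 / c2)) ^ m - (1 - h * \<kappa> * (c1 / c2)) ^ n) / (c1 / c2)"
          by (rule disc_vtail[OF hp hk D i mn])
        also have "\<dots> \<le> D * (1 - h * \<kappa> * (c1 / c2)) ^ m / (c1 / c2)"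
        proof -
          have "0 \<le> (1 - h * \<kappa> * (c1 / c2)) ^ n" using r_bounds(1)[OF hp hk] by simp
          then have "D * ((1 - h * \<kappa> * (c1 / c2)) ^ m - (1 - h * \<kappa> * (c1 / c2)) ^ n) \<le> D * (1 - h * \<kappa> * (c1 / c2)) ^ m"
            using D0 by (intro mult_left_mono) auto
          then show ?thesis using divide_right_mono[OF _ less_imp_le[OF rho_pos]] by simp
        qed
        also have "\<dots> \<le> exp (- lam * s) * D / \<rho>"
        proof -
          have "(1 - h * \<kappa> * (c1 / c2)) ^ m \<le> exp (- lam * s)"
            using r_bounds(3)[OF hp hk, of m] unfolding lam_def \<rho>_def s_def by simp
          then have "D * (1 - h * \<kappa> * (c1 / c2)) ^ m \<le> D * exp (- lam * s)" by (rule mult_left_mono) (rule D0)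
          then have "D * (1 - h * \<kappa> * (c1 / c2)) ^ m \<le> exp (- lam * s) * D" by (simp only: mult.commute)
          then show ?thesis unfolding \<rho>_def using divide_right_mono[OF _ less_imp_le[OF rho_pos]] by simp
        qed
        also have "\<dots> \<le> e" by (rule tailb) (use mhT1 s_def in simp)
        finally show ?thesis .
      qed
      have tb: "norm (?V m i - v (real m * h) i) \<le> e" by (rule eul[OF hp hh0 mhT i])
      have tc: "norm (v (real n * h) i - v s i) \<le> e"
      proof -
        have sol': "mt_sol N \<kappa> a (\<lambda>r. x (s + r)) (\<lambda>r. v (s + r))" by (rule shift_sol[OF sol s0])
        have D': "norm (v (s + 0) i' - v (s + 0) j') \<le> exp (- lam * s) * D" if "i' < N" "j' < N" for i' j'
          using cont_decay[OF sol D s0 that] unfolding lam_def \<rho>_def by simp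
        have r0: "0 \<le> real n * h - s" unfolding s_def using mn hp by (simp add: mult_right_mono)
        have "norm (v (s + (real n * h - s)) i - v (s + 0) i) \<le> exp (- lam * s) * D / (c1 / c2)"
          by (rule cont_vdev[OF sol' D' r0 i]) auto
        also have "\<dots> \<le> e" using tailb[of s] mhT1 unfolding s_def \<rho>_def by simp
        finally show ?thesis by simp
      qed
      have eq: "?V n i - v (real n * h) i = (?V n i - ?V m i) + (?V m i - v (real m * h) i) - (v (real n * h) i - v s i)"
        unfolding s_def by simp
      have "norm (?V n i - v (real n * h) i) \<le> norm (?V n i - ?V m i) + norm (?V m i - v (real m * h) i) + norm (v (real n * h) i - v s i)"
        unfolding eq by (intro order_trans[OF norm_triangle_ineq4] add_mono norm_triangle_ineq order_refl)
      then show ?thesis using ta tb tc by simp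
    qed
  qed
qed

end



lemma frob_le:
  assumes "\<And>i j. i < N \<Longrightarrow> j < N \<Longrightarrow> norm (M i j) \<le> b" and b: "0 \<le> b"
  shows "frob N M \<le> real N * b"
proof -
  have "(\<Sum>i<N. \<Sum>j<N. (norm (M i j))\<^sup>2) \<le> (\<Sum>i<N. \<Sum>j<N. b\<^sup>2)"
    using assms by (intro sum_mono power_mono) auto
  also have "\<dots> = (real N * b)\<^sup>2" by (simp add: power2_eq_square)
  finally show ?thesis unfolding frob_def using b by (metis real_sqrt_le_mono real_sqrt_abs abs_of_nonneg of_nat_0_le_iff mult_nonneg_nonneg)
qed

lemma cnorm_le:
  assumes "\<And>i. i < N \<Longrightarrow> norm (w i) \<le> b" and b: "0 \<le> b"
  shows "cnorm N w \<le> real N * b"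
proof -
  have "(\<Sum>i<N. (norm (w i))\<^sup>2) \<le> (\<Sum>i<N. b\<^sup>2)"
    using assms by (intro sum_mono power_mono) auto
  also have "\<dots> = real N * b\<^sup>2" by simp
  also have "\<dots> \<le> (real N * b)\<^sup>2"
  proof -
    have "real N \<le> real N * real N" by (cases N) auto
    then have "real N * b\<^sup>2 \<le> (real N * real N) * b\<^sup>2" by (intro mult_right_mono) auto
    then show ?thesis by (simp add: power2_eq_square algebra_simps)
  qed
  finally show ?thesis unfolding cnorm_def using b by (metis real_sqrt_le_mono real_sqrt_abs abs_of_nonneg of_nat_0_le_iff mult_nonneg_nonneg)
qed

theorem theorem3p10:
  fixes N :: nat and \<kappa> c1 c2 La :: real and a :: "real \<Rightarrow> real"
  assumes N: "N \<ge> 1" and kappa: "\<kappa> > 0"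
    and c1: "0 < c1" and c12: "c1 \<le> c2"
    and a_bounds: "\<And>r. r \<ge> 0 \<Longrightarrow> c1 \<le> a r \<and> a r \<le> c2"
    and La: "La > 0"
    and a_lip: "\<And>r s. r \<ge> 0 \<Longrightarrow> s \<ge> 0 \<Longrightarrow> \<bar>a r - a s\<bar> \<le> La * \<bar>r - s\<bar>"
  shows "\<exists>c0::real. \<forall>(x :: real \<Rightarrow> nat \<Rightarrow> 'v::euclidean_space) (v :: real \<Rightarrow> nat \<Rightarrow> 'v).
     ((\<forall>t\<ge>0. \<forall>i<N.
          ((\<lambda>s. x s i) has_vector_derivative v t i) (at t within {0..}) \<and>
          ((\<lambda>s. v s i) has_vector_derivative mt_force N \<kappa> a (x t) (v t) i) (at t within {0..}))
      \<and> ennreal (diam N (v 0)) \<le> ennreal \<kappa> * (\<integral>\<^sup>+ s\<in>{diam N (x 0)..}. ennreal (a s) \<partial>lborel)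
      \<and> frob N (delta (x 0)) < M_const N La c1 c2
      \<and> frob N (delta (v 0)) < \<kappa> * integral {frob N (delta (x 0)) .. M_const N La c1 c2} (psi N La c1 c2))
     \<longrightarrow>
     Limsup (at_right 0) (\<lambda>h. SUP n. ereal (frob N (\<lambda>i j.
          delta (fst (mt_disc N \<kappa> a h (x 0) (v 0) n)) i j - delta (x (real n * h)) i j)))
        \<le> ereal (c0 * diam N (v 0))
     \<and> Limsup (at_right 0) (\<lambda>h. SUP n. ereal (cnorm N (\<lambda>i.
          snd (mt_disc N \<kappa> a h (x 0) (v 0) n) i - v (real n * h) i))) = 0"
proof -
  interpret M: mtl N \<kappa> c1 c2 La a
    by unfold_locales (use N kappa c1 c12 a_bounds La a_lip in auto)
  define c0 where "c0 = 2 * real N / (\<kappa> * (c1 / c2))"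
  show ?thesis
  proof (intro exI[of _ c0] allI impI)
    fix x :: "real \<Rightarrow> nat \<Rightarrow> 'v::euclidean_space" and v :: "real \<Rightarrow> nat \<Rightarrow> 'v"
    assume H: "(\<forall>t\<ge>0. \<forall>i<N.
          ((\<lambda>s. x s i) has_vector_derivative v t i) (at t within {0..}) \<and>
          ((\<lambda>s. v s i) has_vector_derivative mt_force N \<kappa> a (x t) (v t) i) (at t within {0..}))
      \<and> ennreal (diam N (v 0)) \<le> ennreal \<kappa> * (\<integral>\<^sup>+ s\<in>{diam N (x 0)..}. ennreal (a s) \<partial>lborel)
      \<and> frob N (delta (x 0)) < M_const N La c1 c2
      \<and> frob N (delta (v 0)) < \<kappa> * integral {frob N (delta (x 0)) .. M_const N La c1 c2} (psi N La c1 c2)"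
    have sol: "mt_sol N \<kappa> a x v" unfolding mt_sol_def using H by blast
    define D0 where "D0 = diam N (v 0)"
    have fin: "finite {norm (v 0 i - v 0 j) | i j. i < N \<and> j < N}"
      by (rule finite_image_set2) auto
    have D: "norm (v 0 i - v 0 j) \<le> D0" if "i < N" "j < N" for i j
      unfolding D0_def diam_def by (rule Max_ge[OF fin]) (use that in blast)
    have D0: "0 \<le> D0" by (rule M.D_nonneg[OF D])
    have rp: "0 < c1 / c2" by (rule M.rho_pos)
    have c2p: "0 < c2" using c1 c12 by simp
    have P1: "Limsup (at_right 0) (\<lambda>h. SUP n. ereal (frob N (\<lambda>i j.
          delta (fst (mt_disc N \<kappa> a h (x 0) (v 0) n)) i j - delta (x (real n * h)) i j)))
        \<le> ereal (c0 * D0)"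
    proof (rule Limsup_bounded)
      show "\<forall>\<^sub>F h in at_right 0. (SUP n. ereal (frob N (\<lambda>i j.
          delta (fst (mt_disc N \<kappa> a h (x 0) (v 0) n)) i j - delta (x (real n * h)) i j))) \<le> ereal (c0 * D0)"
        unfolding eventually_at_right_field
      proof (intro exI[of _ "1 / \<kappa>"] conjI allI impI)
        show "(0::real) < 1 / \<kappa>" using kappa by simp
        fix h :: real assume hp: "0 < h" and hk': "h < 1 / \<kappa>"
        have hk: "h * \<kappa> \<le> 1" using hk' kappa by (simp add: field_simps)
        have bnd: "frob N (\<lambda>i j. delta (fst (mt_disc N \<kappa> a h (x 0) (v 0) n)) i j - delta (x (real n * h)) i j) \<le> c0 * D0" for n
        proof -
          have "frob N (\<lambda>i j. delta (fst (mt_disc N \<kappa> a h (x 0) (v 0) n)) i j - delta (x (real n * h)) i j)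
              \<le> real N * (2 * D0 / (\<kappa> * (c1 / c2)))"
            unfolding delta_def
            by (rule frob_le) (use M.pos_uniform[OF sol D hp hk] D0 kappa rp c1 c2p in \<open>auto intro!: divide_nonneg_pos\<close>)
          also have "\<dots> = c0 * D0" unfolding c0_def by simp
          finally show ?thesis .
        qed
        show "(SUP n. ereal (frob N (\<lambda>i j.
          delta (fst (mt_disc N \<kappa> a h (x 0) (v 0) n)) i j - delta (x (real n * h)) i j))) \<le> ereal (c0 * D0)"
          by (rule SUP_least) (simp add: bnd)
      qed
    qed
    have P2a: "Limsup (at_right 0) (\<lambda>h. SUP n. ereal (cnorm N (\<lambda>i.
          snd (mt_disc N \<kappa> a h (x 0) (v 0) n) i - v (real n * h) i))) \<le> 0"
    proof (rule ereal_le_epsilon2)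
      fix e :: real assume e: "0 < e"
      define e' where "e' = e / (3 * real N)"
      have e': "0 < e'" unfolding e'_def using e N by simp
      obtain h0 where h0: "0 < h0" and hu: "\<And>h n i. 0 < h \<and> h < h0 \<Longrightarrow> i < N \<Longrightarrow>
          norm (snd (mt_disc N \<kappa> a h (x 0) (v 0) n) i - v (real n * h) i) \<le> 3 * e'"
        using M.vel_uniform[OF sol D e'] by blast
      have "Limsup (at_right 0) (\<lambda>h. SUP n. ereal (cnorm N (\<lambda>i.
          snd (mt_disc N \<kappa> a h (x 0) (v 0) n) i - v (real n * h) i))) \<le> ereal e"
      proof (rule Limsup_bounded)
        show "\<forall>\<^sub>F h in at_right 0. (SUP n. ereal (cnorm N (\<lambda>i.
          snd (mt_disc N \<kappa> a h (x 0) (v 0) n) i - v (real n * h) i))) \<le> ereal e"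
          unfolding eventually_at_right_field
        proof (intro exI[of _ h0] conjI allI impI)
          show "(0::real) < h0" by (rule h0)
          fix h :: real assume hp: "0 < h" and hh: "h < h0"
          have bnd: "cnorm N (\<lambda>i. snd (mt_disc N \<kappa> a h (x 0) (v 0) n) i - v (real n * h) i) \<le> e" for n
          proof -
            have "cnorm N (\<lambda>i. snd (mt_disc N \<kappa> a h (x 0) (v 0) n) i - v (real n * h) i) \<le> real N * (3 * e')"
              by (rule cnorm_le) (use hu hp hh e' in auto)
            also have "\<dots> = e" unfolding e'_def using N by simp
            finally show ?thesis .
          qed
          show "(SUP n. ereal (cnorm N (\<lambda>i.
            snd (mt_disc N \<kappa> a h (x 0) (v 0) n) i - v (real n * h) i))) \<le> ereal e"
            by (rule SUP_least) (simp add: bnd)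
        qed
      qed
      then show "Limsup (at_right 0) (\<lambda>h. SUP n. ereal (cnorm N (\<lambda>i.
          snd (mt_disc N \<kappa> a h (x 0) (v 0) n) i - v (real n * h) i))) \<le> 0 + ereal e" by simp
    qed
    have P2b: "0 \<le> Limsup (at_right 0) (\<lambda>h. SUP n. ereal (cnorm N (\<lambda>i.
          snd (mt_disc N \<kappa> a h (x 0) (v 0) n) i - v (real n * h) i)))"
    proof (rule le_Limsup)
      show "at_right (0::real) \<noteq> bot" by simp
      show "\<forall>\<^sub>F h in at_right 0. 0 \<le> (SUP n. ereal (cnorm N (\<lambda>i.
          snd (mt_disc N \<kappa> a h (x 0) (v 0) n) i - v (real n * h) i)))"
      proof (rule always_eventually, intro allI)
        fix h :: real
        have "(0::ereal) \<le> ereal (cnorm N (\<lambda>i. snd (mt_disc N \<kappa> a h (x 0) (v 0) 0) i - v (real 0 * h) i))"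
          unfolding cnorm_def by (simp add: sum_nonneg)
        also have "\<dots> \<le> (SUP n. ereal (cnorm N (\<lambda>i.
          snd (mt_disc N \<kappa> a h (x 0) (v 0) n) i - v (real n * h) i)))"
          by (rule SUP_upper) simp
        finally show "0 \<le> (SUP n. ereal (cnorm N (\<lambda>i.
          snd (mt_disc N \<kappa> a h (x 0) (v 0) n) i - v (real n * h) i)))" .
      qed
    qed
    show "Limsup (at_right 0) (\<lambda>h. SUP n. ereal (frob N (\<lambda>i j.
          delta (fst (mt_disc N \<kappa> a h (x 0) (v 0) n)) i j - delta (x (real n * h)) i j)))
        \<le> ereal (c0 * diam N (v 0))
     \<and> Limsup (at_right 0) (\<lambda>h. SUP n. ereal (cnorm N (\<lambda>i.
          snd (mt_disc N \<kappa> a h (x 0) (v 0) n) i - v (real n * h) i))) = 0"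
      using P1 P2a P2b unfolding D0_def by (simp add: antisym)
  qed
qed



end
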